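(* Let $B$ be an aperiodic Bratteli diagram of finite rank $d$. Then there exists $j\in\{1,\dots,d\}$ such that $\mu$-almost every ordering $\omega\in\mathcal O_B$ has exactly $j$ maximal paths and exactly $j$ minimal paths; in particular $\mu(\mathcal O_B(j))=1$ and $|X_{\max}(\omega)|=|X_{\min}(\omega)|$ for $\mu$-almost all $\omega$.
   Context: A Bratteli diagram $B$ has levels $V_n$ ($V_0=\{v_0\}$, all finite) and finite edge sets $E_n$ from $V_{n-1}$ to $V_n$ with source/range maps $s,r$, $s^{-1}(v)\ne\emptyset$, $r^{-1}(v)\ne\emptyset$ for $v\ne v_0$. $X_B$ is the space of infinite paths from $v_0$. $B$ is aperiodic if every tail-equivalence class of $X_B$ is infinite. Rank $d$: $\sup_n|V_n|<\infty$ and $d$ is the least integer with $|V_n|=d$ infinitely often. An ordering is a linear order on each $r^{-1}(v)$, $v\ne v_0$; $\mathcal O_B=\prod_{v\in V^*\setminus V_0}P_v$, $P_v$ the set of linear orders of $r^{-1}(v)$. $\mu=\prod_v\mu_v$ is the product measure where $\mu_v$ is uniform on $P_v$ (each order has mass $1/|r^{-1}(v)|!$). $X_{\max}(\omega),X_{\min}(\omega)$: infinite paths all of whose edges are maximal (minimal). $\mathcal O_B(j)$: orderings with exactly $j$ maximal paths. *)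

theory Defs
  imports "HOL-Probability.Probability"
begin

text \<open>A Bratteli diagram is encoded concretely:
  level n has vertex set {..<vn n}; for n \<ge> 1 the edge set E_n is {..<en n}
  (edges from level n-1 to level n), with source map src n and range map rng n.
  Values of en 0, src 0, rng 0 are irrelevant.\<close>

definition is_bratteli ::
  "(nat \<Rightarrow> nat) \<Rightarrow> (nat \<Rightarrow> nat) \<Rightarrow> (nat \<Rightarrow> nat \<Rightarrow> nat) \<Rightarrow> (nat \<Rightarrow> nat \<Rightarrow> nat) \<Rightarrow> bool" where
  "is_bratteli vn en src rng \<longleftrightarrow>
     vn 0 = 1 \<and> (\<forall>n. 1 \<le> vn n) \<and>
     (\<forall>n\<ge>1. \<forall>e<en n. src n e < vn (n - 1) \<and> rng n e < vn n) \<and>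
     (\<forall>n\<ge>1. \<forall>v<vn n. (\<exists>e<en n. rng n e = v) \<and> (\<exists>e<en (Suc n). src (Suc n) e = v))"

definition in_edges :: "(nat \<Rightarrow> nat) \<Rightarrow> (nat \<Rightarrow> nat \<Rightarrow> nat) \<Rightarrow> nat \<Rightarrow> nat \<Rightarrow> nat set" where
  "in_edges en rng n v = {e. e < en n \<and> rng n e = v}"

text \<open>Infinite paths from v_0: x n is the edge used in E_n (n \<ge> 1); x 0 normalised to 0.\<close>
definition path_space :: "(nat \<Rightarrow> nat) \<Rightarrow> (nat \<Rightarrow> nat \<Rightarrow> nat) \<Rightarrow> (nat \<Rightarrow> nat \<Rightarrow> nat) \<Rightarrow> (nat \<Rightarrow> nat) set" where
  "path_space en src rng =
     {x. x 0 = 0 \<and> (\<forall>n\<ge>1. x n < en n) \<and> src 1 (x 1) = 0 \<and>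
         (\<forall>n\<ge>1. rng n (x n) = src (Suc n) (x (Suc n)))}"

definition tail_equiv :: "(nat \<Rightarrow> nat) \<Rightarrow> (nat \<Rightarrow> nat) \<Rightarrow> bool" where
  "tail_equiv x y \<longleftrightarrow> (\<exists>N. \<forall>n\<ge>N. x n = y n)"

definition aperiodic :: "(nat \<Rightarrow> nat) \<Rightarrow> (nat \<Rightarrow> nat \<Rightarrow> nat) \<Rightarrow> (nat \<Rightarrow> nat \<Rightarrow> nat) \<Rightarrow> bool" where
  "aperiodic en src rng \<longleftrightarrow>
     (\<forall>x\<in>path_space en src rng. infinite {y \<in> path_space en src rng. tail_equiv x y})"

definition has_rank :: "(nat \<Rightarrow> nat) \<Rightarrow> nat \<Rightarrow> bool" where
  "has_rank vn d \<longleftrightarrow> (\<exists>M. \<forall>n. vn n \<le> M) \<and> d = (LEAST k. infinite {n. vn n = k})"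

text \<open>A linear order on r^{-1}(v) is encoded by its rank function, a bijection
  r^{-1}(v) \<rightarrow> {0..<|r^{-1}(v)|} (0 = minimal edge), extended by 0 outside.\<close>
definition orders_at :: "(nat \<Rightarrow> nat) \<Rightarrow> (nat \<Rightarrow> nat \<Rightarrow> nat) \<Rightarrow> nat \<Rightarrow> nat \<Rightarrow> (nat \<Rightarrow> nat) set" where
  "orders_at en rng n v =
     {f. bij_betw f (in_edges en rng n v) {..<card (in_edges en rng n v)} \<and>
         (\<forall>e. e \<notin> in_edges en rng n v \<longrightarrow> f e = 0)}"

definition vertices :: "(nat \<Rightarrow> nat) \<Rightarrow> (nat \<times> nat) set" where
  "vertices vn = {(n, v). 1 \<le> n \<and> v < vn n}"

definition ord_measure ::
  "(nat \<Rightarrow> nat) \<Rightarrow> (nat \<Rightarrow> nat) \<Rightarrow> (nat \<Rightarrow> nat \<Rightarrow> nat) \<Rightarrow> ((nat \<times> nat) \<Rightarrow> (nat \<Rightarrow> nat)) measure" where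
  "ord_measure vn en rng =
     PiM (vertices vn) (\<lambda>(n, v). measure_pmf (pmf_of_set (orders_at en rng n v)))"

definition Xmax ::
  "(nat \<Rightarrow> nat) \<Rightarrow> (nat \<Rightarrow> nat \<Rightarrow> nat) \<Rightarrow> (nat \<Rightarrow> nat \<Rightarrow> nat) \<Rightarrow> ((nat \<times> nat) \<Rightarrow> (nat \<Rightarrow> nat)) \<Rightarrow> (nat \<Rightarrow> nat) set" where
  "Xmax en src rng \<omega> =
     {x \<in> path_space en src rng. \<forall>n\<ge>1.
        \<omega> (n, rng n (x n)) (x n) = card (in_edges en rng n (rng n (x n))) - 1}"

definition Xmin ::
  "(nat \<Rightarrow> nat) \<Rightarrow> (nat \<Rightarrow> nat \<Rightarrow> nat) \<Rightarrow> (nat \<Rightarrow> nat \<Rightarrow> nat) \<Rightarrow> ((nat \<times> nat) \<Rightarrow> (nat \<Rightarrow> nat)) \<Rightarrow> (nat \<Rightarrow> nat) set" where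
  "Xmin en src rng \<omega> =
     {x \<in> path_space en src rng. \<forall>n\<ge>1. \<omega> (n, rng n (x n)) (x n) = 0}"

end

theory Submission
  imports Defs
begin


locale BD =
  fixes vn en :: "nat \<Rightarrow> nat" and src rng :: "nat \<Rightarrow> nat \<Rightarrow> nat"
  assumes B: "is_bratteli vn en src rng"
begin

lemma vn0: "vn 0 = 1" using B by (simp add: is_bratteli_def)
lemma vpos: "1 \<le> vn n" using B by (simp add: is_bratteli_def)
lemma edge_ok: assumes "1 \<le> n" "e < en n" shows "src n e < vn (n - 1) \<and> rng n e < vn n"
proof -
  have h: "\<forall>n\<ge>1. \<forall>e<en n. src n e < vn (n - 1) \<and> rng n e < vn n"
    using B unfolding is_bratteli_def by (elim conjE)
  show ?thesis using h assms by simp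
qed
lemma in_surj: "1 \<le> n \<Longrightarrow> v < vn n \<Longrightarrow> \<exists>e<en n. rng n e = v"
  using B by (simp add: is_bratteli_def)

abbreviation IE where "IE n v \<equiv> in_edges en rng n v"
definition rk where "rk n v = card (IE n v) - 1"

lemma IE_fin: "finite (IE n v)" by (simp add: in_edges_def)
lemma IE_ne: "1 \<le> n \<Longrightarrow> v < vn n \<Longrightarrow> IE n v \<noteq> {}"
  using in_surj by (auto simp: in_edges_def)

definition good where
  "good \<omega> \<longleftrightarrow> (\<forall>n\<ge>1. \<forall>v<vn n. \<omega> (n, v) \<in> orders_at en rng n v)"

definition sel where "sel \<omega> n v = (SOME e. e \<in> IE n v \<and> \<omega> (n, v) e = rk n v)"
definition g where "g \<omega> n v = src n (sel \<omega> n v)"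

lemma sel_ex: assumes "good \<omega>" "1 \<le> n" "v < vn n"
  shows "sel \<omega> n v \<in> IE n v \<and> \<omega> (n, v) (sel \<omega> n v) = rk n v"
proof -
  have o: "\<omega> (n, v) \<in> orders_at en rng n v" using assms by (auto simp: good_def)
  then have bij: "bij_betw (\<omega> (n,v)) (IE n v) {..<card (IE n v)}" by (simp add: orders_at_def)
  have "card (IE n v) > 0" using IE_ne[OF assms(2,3)] IE_fin by (simp add: card_gt_0_iff)
  then have "rk n v \<in> {..<card (IE n v)}" by (simp add: rk_def)
  then have "\<exists>e. e \<in> IE n v \<and> \<omega> (n, v) e = rk n v"
    using bij unfolding bij_betw_def by (metis imageE)
  then show ?thesis unfolding sel_def by (rule someI_ex)
qed

lemma sel_uniq: assumes "good \<omega>" "1 \<le> n" "v < vn n" "e \<in> IE n v" "\<omega> (n, v) e = rk n v"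
  shows "e = sel \<omega> n v"
proof -
  have o: "\<omega> (n, v) \<in> orders_at en rng n v" using assms by (auto simp: good_def)
  then have "inj_on (\<omega> (n,v)) (IE n v)" by (simp add: orders_at_def bij_betw_def)
  with sel_ex[OF assms(1-3)] assms(4,5) show ?thesis by (metis inj_onD)
qed

lemma sel_props: assumes "good \<omega>" "1 \<le> n" "v < vn n"
  shows "sel \<omega> n v < en n" "rng n (sel \<omega> n v) = v" "g \<omega> n v < vn (n - 1)"
  using sel_ex[OF assms] edge_ok[OF assms(2)] by (auto simp: in_edges_def g_def)

fun Gd where
  "Gd \<omega> n 0 w = w"
| "Gd \<omega> n (Suc j) w = Gd \<omega> n j (g \<omega> (n + j + 1) w)"

lemma Gd_lt: "good \<omega> \<Longrightarrow> w < vn (n + j) \<Longrightarrow> Gd \<omega> n j w < vn n"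
proof (induction j arbitrary: w)
  case 0 then show ?case by simp
next
  case (Suc j)
  have "g \<omega> (n + j + 1) w < vn (n + j)"
    using sel_props(3)[OF Suc.prems(1), of "n+j+1" w] Suc.prems by simp
  then show ?case using Suc by simp
qed

lemma Gd_Suc': "Gd \<omega> n (Suc j) w = g \<omega> (n + 1) (Gd \<omega> (n + 1) j w)"
proof (induction j arbitrary: w)
  case 0 then show ?case by simp
next
  case (Suc j)
  have "Gd \<omega> n (Suc (Suc j)) w = Gd \<omega> n (Suc j) (g \<omega> (n + Suc j + 1) w)" by simp
  also have "\<dots> = g \<omega> (n + 1) (Gd \<omega> (n + 1) j (g \<omega> (n + Suc j + 1) w))" by (rule Suc.IH)
  also have "\<dots> = g \<omega> (n + 1) (Gd \<omega> (n + 1) (Suc j) w)" by (simp add: algebra_simps)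
  finally show ?case .
qed

definition RR where "RR \<omega> n = {v. v < vn n \<and> (\<forall>j. \<exists>w<vn (n + j). Gd \<omega> n j w = v)}"

lemma RR_sub: "RR \<omega> n \<subseteq> {..<vn n}" by (auto simp: RR_def)
lemma RR_fin: "finite (RR \<omega> n)" using RR_sub finite_subset by blast
lemma RR_card_le: "card (RR \<omega> n) \<le> vn n"
  using card_mono[OF _ RR_sub] by simp

lemma RR0: assumes "good \<omega>" shows "RR \<omega> 0 = {0}"
proof -
  have "Gd \<omega> 0 j 0 < vn 0" for j using Gd_lt[OF assms, of 0 0 j] vpos[of j] by simp
  then have "Gd \<omega> 0 j 0 = 0" for j using vn0 by simp
  then have "0 \<in> RR \<omega> 0" using vpos vn0 unfolding RR_def
    by (auto intro!: exI[of _ 0] simp: Suc_le_eq)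
  then show ?thesis using RR_sub[of \<omega> 0] vn0 by auto
qed

definition fpath where
  "fpath n p \<longleftrightarrow> p 0 = 0 \<and> (\<forall>k. 1 \<le> k \<and> k \<le> n \<longrightarrow> p k < en k) \<and>
     (1 \<le> n \<longrightarrow> src 1 (p 1) = 0) \<and>
     (\<forall>k. 1 \<le> k \<and> k < n \<longrightarrow> rng k (p k) = src (Suc k) (p (Suc k))) \<and> (\<forall>k>n. p k = 0)"

definition alw where "alw \<omega> n e \<longleftrightarrow> e < en n \<and> \<omega> (n, rng n e) e = rk n (rng n e)"

definition afp where "afp \<omega> n p \<longleftrightarrow> fpath n p \<and> (\<forall>k. 1 \<le> k \<and> k \<le> n \<longrightarrow> alw \<omega> k (p k))"

definition tr :: "nat \<Rightarrow> (nat \<Rightarrow> nat) \<Rightarrow> nat \<Rightarrow> nat" where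
  "tr n x = (\<lambda>k. if k \<le> n then x k else 0)"

definition Q where "Q \<omega> n = {p. afp \<omega> n p \<and> (\<forall>m\<ge>n. \<exists>q. afp \<omega> m q \<and> tr n q = p)}"

definition endp where "endp n p = (if n = 0 then 0 else rng n (p n))"

lemma tr_tr: "tr n (tr m q) = tr (min n m) q" by (auto simp: tr_def)

lemma fpath_tr: "fpath m q \<Longrightarrow> n \<le> m \<Longrightarrow> fpath n (tr n q)"
  by (auto simp: fpath_def tr_def)

lemma afp_tr: "afp \<omega> m q \<Longrightarrow> n \<le> m \<Longrightarrow> afp \<omega> n (tr n q)"
  by (auto simp: afp_def fpath_tr) (auto simp: tr_def)

lemma fpath_tr_id: "fpath n p \<Longrightarrow> tr n p = p"
  by (auto simp: fpath_def tr_def fun_eq_iff)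

lemma endp_tr: "endp n (tr n q) = endp n q" by (simp add: endp_def tr_def)

lemma fpath_fin: "finite {p. fpath n p}"
proof -
  define B where "B = Suc (Max (en ` {..n}))"
  have "{p. fpath n p} \<subseteq> (\<lambda>f k. if k \<le> n then f k else 0) ` ({..n} \<rightarrow>\<^sub>E {..<B})"
  proof
    fix p assume p: "p \<in> {p. fpath n p}"
    have "p k < B" if "k \<le> n" for k
    proof (cases "k = 0")
      case True then have "p k = 0" using p by (simp add: fpath_def)
      then show ?thesis by (simp add: B_def)
    next
      case False
      then have "p k < en k" using p that by (simp add: fpath_def)
      moreover have "en k \<le> Max (en ` {..n})" using that by simp
      then have "en k \<le> B" unfolding B_def by simp
      ultimately show ?thesis by simp
    qed
    then have "restrict p {..n} \<in> {..n} \<rightarrow>\<^sub>E {..<B}" by auto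
    moreover have "p = (\<lambda>k. if k \<le> n then restrict p {..n} k else 0)"
      using p by (auto simp: fpath_def fun_eq_iff)
    ultimately show "p \<in> (\<lambda>f k. if k \<le> n then f k else 0) ` ({..n} \<rightarrow>\<^sub>E {..<B})"
      by blast
  qed
  then show ?thesis by (rule finite_subset) (auto intro!: finite_PiE)
qed

lemma Q_fin: "finite (Q \<omega> n)"
  by (rule finite_subset[OF _ fpath_fin[of n]]) (auto simp: Q_def afp_def)

lemma Q_step: assumes "p \<in> Q \<omega> n" shows "\<exists>p'\<in>Q \<omega> (Suc n). tr n p' = p"
proof -
  have "\<forall>m. \<exists>q. afp \<omega> (m + Suc n) q \<and> tr n q = p" using assms by (auto simp: Q_def)
  then obtain q where q: "\<And>m. afp \<omega> (m + Suc n) (q m) \<and> tr n (q m) = p" by metis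
  define h where "h m = tr (Suc n) (q m)" for m
  have "fpath (Suc n) (h m)" for m
    using fpath_tr[of "m + Suc n" "q m" "Suc n"] q[of m] by (simp add: h_def afp_def)
  then have hf: "h ` UNIV \<subseteq> {p. fpath (Suc n) p}" by auto
  then have "finite (h ` UNIV)" using fpath_fin finite_subset by blast
  then obtain a0 where a0: "infinite {a. h a = h a0}"
    using pigeonhole_infinite[of "UNIV::nat set" h] by auto
  have "h a0 \<in> Q \<omega> (Suc n)"
    unfolding Q_def
  proof (intro CollectI conjI allI impI)
    show "afp \<omega> (Suc n) (h a0)" unfolding h_def using q[of a0] by (auto intro: afp_tr)
    fix m assume m: "Suc n \<le> m"
    obtain a where a: "a \<in> {a. h a = h a0}" "m \<le> a"
      using a0 infinite_nat_iff_unbounded_le by blast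
    have "afp \<omega> m (tr m (q a))" using q[of a] a(2) by (auto intro: afp_tr)
    moreover have "tr (Suc n) (tr m (q a)) = h a0" using a m by (simp add: tr_tr h_def min_def)
    ultimately show "\<exists>q. afp \<omega> m q \<and> tr (Suc n) q = h a0" by blast
  qed
  moreover have "tr n (h a0) = p" using q[of a0] by (simp add: h_def tr_tr min_def)
  ultimately show ?thesis by blast
qed

lemma Xmax_afp: assumes "x \<in> Xmax en src rng \<omega>" shows "afp \<omega> n (tr n x)"
  using assms unfolding Xmax_def path_space_def afp_def fpath_def alw_def rk_def tr_def in_edges_def
  by auto

lemma Q_path: assumes "p \<in> Q \<omega> n" shows "\<exists>x\<in>Xmax en src rng \<omega>. tr n x = p"
proof -
  define ps where "ps = rec_nat p (\<lambda>k pk. SOME p'. p' \<in> Q \<omega> (Suc (n + k)) \<and> tr (n + k) p' = pk)"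
  have ps0: "ps 0 = p" by (simp add: ps_def)
  have psS: "ps (Suc k) = (SOME p'. p' \<in> Q \<omega> (Suc (n + k)) \<and> tr (n + k) p' = ps k)" for k
    by (simp add: ps_def)
  have psQ: "ps k \<in> Q \<omega> (n + k) \<and> tr (n + k) (ps (Suc k)) = ps k \<and> ps (Suc k) \<in> Q \<omega> (Suc (n + k))" for k
  proof (induction k)
    case 0
    have "\<exists>p'. p' \<in> Q \<omega> (Suc (n + 0)) \<and> tr (n + 0) p' = ps 0" using Q_step[OF assms] ps0 by auto
    from someI_ex[OF this] show ?case using assms ps0 psS[of 0] by simp
  next
    case (Suc k)
    then have "ps (Suc k) \<in> Q \<omega> (n + Suc k)" by simp
    then have "\<exists>p'. p' \<in> Q \<omega> (Suc (n + Suc k)) \<and> tr (n + Suc k) p' = ps (Suc k)"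
      using Q_step by blast
    from someI_ex[OF this] show ?case using Suc psS[of "Suc k"] by simp
  qed
  have afps: "afp \<omega> (n + k) (ps k)" for k using psQ[of k] by (simp add: Q_def)
  have trj: "k \<le> j \<Longrightarrow> tr (n + k) (ps j) = ps k" for k j
  proof (induction j rule: dec_induct)
    case base then show ?case using afps[of k] by (simp add: afp_def fpath_tr_id)
  next
    case (step j)
    have "tr (n + k) (ps (Suc j)) = tr (n + k) (tr (n + j) (ps (Suc j)))"
      using step by (simp add: tr_tr min_def)
    also have "\<dots> = ps k" using psQ[of j] step by simp
    finally show ?case .
  qed
  define x where "x k = ps k k" for k
  have xk: "k \<le> n + j \<Longrightarrow> x k = ps j k" for k j
  proof (cases "k \<le> j")
    case True
    assume "k \<le> n + j"
    have "ps k k = tr (n + k) (ps j) k" using trj[OF True] by simp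
    then show ?thesis by (simp add: x_def tr_def)
  next
    case False
    assume "k \<le> n + j"
    have "ps j k = tr (n + j) (ps k) k" using trj[of j k] False by simp
    then show ?thesis using \<open>k \<le> n + j\<close> by (simp add: x_def tr_def)
  qed
  have af: "fpath (n + k) (ps k) \<and> (\<forall>i. 1 \<le> i \<and> i \<le> n + k \<longrightarrow> alw \<omega> i (ps k i))" for k
    using afps[of k] by (auto simp: afp_def)
  have xp: "x \<in> path_space en src rng"
    unfolding path_space_def
  proof (intro CollectI conjI allI impI)
    show "x 0 = 0" using afps[of 0] by (simp add: x_def afp_def fpath_def)
    show "src 1 (x 1) = 0" using af[of 1] by (simp add: x_def fpath_def)
    fix k :: nat assume k: "1 \<le> k"
    show "x k < en k" using af[of k] k by (simp add: x_def fpath_def)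
    have "rng k (ps (Suc k) k) = src (Suc k) (ps (Suc k) (Suc k))" using af[of "Suc k"] k
      unfolding fpath_def by simp
    then show "rng k (x k) = src (Suc k) (x (Suc k))"
      using xk[of k "Suc k"] by (simp add: x_def)
  qed
  have "\<forall>k\<ge>1. \<omega> (k, rng k (x k)) (x k) = card (in_edges en rng k (rng k (x k))) - 1"
    using af by (auto simp: x_def alw_def rk_def)
  then have xX: "x \<in> Xmax en src rng \<omega>" using xp by (simp add: Xmax_def)
  have "tr n x = p"
  proof
    fix k show "tr n x k = p k"
    proof (cases "k \<le> n")
      case True then show ?thesis using xk[of k 0] ps0 by (simp add: tr_def)
    next
      case False then show ?thesis using afps[of 0] ps0 by (simp add: tr_def afp_def fpath_def)
    qed
  qed
  with xX show ?thesis by blast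
qed

lemma Q_eq: "Q \<omega> n = tr n ` Xmax en src rng \<omega>"
proof
  show "Q \<omega> n \<subseteq> tr n ` Xmax en src rng \<omega>" using Q_path by blast
  show "tr n ` Xmax en src rng \<omega> \<subseteq> Q \<omega> n"
  proof
    fix p assume "p \<in> tr n ` Xmax en src rng \<omega>"
    then obtain x where x: "x \<in> Xmax en src rng \<omega>" "p = tr n x" by blast
    have "\<exists>q. afp \<omega> m q \<and> tr n q = p" if "n \<le> m" for m
      using Xmax_afp[OF x(1), of m] that x(2) by (auto simp: tr_tr min_def)
    then show "p \<in> Q \<omega> n" using Xmax_afp[OF x(1), of n] x(2) by (simp add: Q_def)
  qed
qed

lemma Q_mono1: "card (Q \<omega> n) \<le> card (Q \<omega> (Suc n))"
proof -
  have "Q \<omega> n \<subseteq> tr n ` Q \<omega> (Suc n)" using Q_step by blast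
  then have "card (Q \<omega> n) \<le> card (tr n ` Q \<omega> (Suc n))"
    by (rule card_mono[OF finite_imageI[OF Q_fin]])
  also have "\<dots> \<le> card (Q \<omega> (Suc n))" by (rule card_image_le[OF Q_fin])
  finally show ?thesis .
qed

lemma Q_mono: "n \<le> m \<Longrightarrow> card (Q \<omega> n) \<le> card (Q \<omega> m)"
  by (rule lift_Suc_mono_le[of "\<lambda>n. card (Q \<omega> n)"]) (auto intro: Q_mono1)

lemma tr_inj: assumes "finite (F :: (nat \<Rightarrow> nat) set)" shows "\<exists>N. \<forall>n\<ge>N. inj_on (tr n) F"
proof -
  define D where "D = {d \<in> F \<times> F. fst d \<noteq> snd d}"
  have "\<forall>d\<in>D. \<exists>k. fst d k \<noteq> snd d k" by (auto simp: D_def fun_eq_iff)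
  then obtain kk where kk: "\<And>d. d \<in> D \<Longrightarrow> fst d (kk d) \<noteq> snd d (kk d)" by metis
  have fD: "finite D" using assms by (auto simp: D_def)
  define N where "N = Max (insert 0 (kk ` D))"
  have "inj_on (tr n) F" if "N \<le> n" for n
  proof (rule inj_onI, rule ccontr)
    fix x y assume xy: "x \<in> F" "y \<in> F" "tr n x = tr n y" "x \<noteq> y"
    then have d: "(x, y) \<in> D" by (simp add: D_def)
    then have "kk (x, y) \<le> N" unfolding N_def using fD by simp
    then have "tr n x (kk (x,y)) = x (kk (x,y))" "tr n y (kk (x,y)) = y (kk (x,y))"
      using that by (auto simp: tr_def)
    then show False using kk[OF d] xy(3) by simp
  qed
  then show ?thesis by blast
qed

lemma afp_down: assumes "good \<omega>" "afp \<omega> m p" "1 \<le> k" "k \<le> m"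
  shows "endp k p < vn k \<and> p k = sel \<omega> k (endp k p) \<and> g \<omega> k (endp k p) = endp (k - 1) p"
proof -
  have f: "fpath m p" and a: "alw \<omega> k (p k)" using assms by (auto simp: afp_def)
  have e: "p k < en k" using a by (simp add: alw_def)
  have ek: "endp k p = rng k (p k)" using assms(3) by (simp add: endp_def)
  have lt: "endp k p < vn k" using edge_ok[OF assms(3) e] ek by simp
  have "p k \<in> IE k (endp k p)" using e ek by (simp add: in_edges_def)
  then have s: "p k = sel \<omega> k (endp k p)"
    using sel_uniq[OF assms(1,3) lt] a ek by (simp add: alw_def)
  have "src k (p k) = endp (k - 1) p"
  proof (cases "k = 1")
    case True then show ?thesis using f assms(4) by (simp add: fpath_def endp_def)
  next
    case False
    have kk: "1 \<le> k - 1 \<and> k - 1 < m" using False assms(3,4) by auto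
    then have "rng (k - 1) (p (k - 1)) = src (Suc (k - 1)) (p (Suc (k - 1)))"
      using f unfolding fpath_def by blast
    then show ?thesis using False assms(3) by (simp add: endp_def)
  qed
  then show ?thesis using lt s by (simp add: g_def)
qed

lemma afp_down_lt: "good \<omega> \<Longrightarrow> afp \<omega> m p \<Longrightarrow> 1 \<le> k \<Longrightarrow> k \<le> m \<Longrightarrow> endp k p < vn k"
  using afp_down by blast
lemma afp_down_sel: "good \<omega> \<Longrightarrow> afp \<omega> m p \<Longrightarrow> 1 \<le> k \<Longrightarrow> k \<le> m \<Longrightarrow> p k = sel \<omega> k (endp k p)"
  using afp_down by blast
lemma afp_down_g: "good \<omega> \<Longrightarrow> afp \<omega> m p \<Longrightarrow> 1 \<le> k \<Longrightarrow> k \<le> m \<Longrightarrow> g \<omega> k (endp k p) = endp (k - 1) p"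
  using afp_down by blast

lemma afp_Gd: assumes "good \<omega>" "afp \<omega> m p" shows "n + j \<le> m \<Longrightarrow> Gd \<omega> n j (endp (n + j) p) = endp n p"
proof (induction j)
  case 0 then show ?case by simp
next
  case (Suc j)
  have "g \<omega> (n + j + 1) (endp (n + j + 1) p) = endp (n + j) p"
    using afp_down_g[OF assms, of "n + j + 1"] Suc.prems by simp
  then show ?case using Suc by simp
qed

lemma afp_unique: assumes "good \<omega>" "afp \<omega> n p" "afp \<omega> n q" "endp n p = endp n q"
  shows "p = q"
proof
  fix k
  show "p k = q k"
  proof (cases "1 \<le> k \<and> k \<le> n")
    case True
    have "endp k p = endp k q"
      using afp_Gd[OF assms(1,2), of k "n - k"] afp_Gd[OF assms(1,3), of k "n - k"] True assms(4)
      by simp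
    moreover have "p k = sel \<omega> k (endp k p)" using afp_down_sel[OF assms(1,2), of k] True by blast
    moreover have "q k = sel \<omega> k (endp k q)" using afp_down_sel[OF assms(1,3), of k] True by blast
    ultimately show ?thesis by simp
  next
    case False
    then show ?thesis using assms(2,3) by (cases "k = 0") (auto simp: afp_def fpath_def)
  qed
qed

definition bp where "bp \<omega> n v = (\<lambda>k. if 1 \<le> k \<and> k \<le> n then sel \<omega> k (Gd \<omega> k (n - k) v) else 0)"

lemma bp_afp: assumes "good \<omega>" "v < vn n"
  shows "afp \<omega> n (bp \<omega> n v) \<and> endp n (bp \<omega> n v) = v"
proof -
  define u where "u k = Gd \<omega> k (n - k) v" for k
  have ult: "k \<le> n \<Longrightarrow> u k < vn k" for k using Gd_lt[OF assms(1), of v k "n - k"] assms(2)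
    by (simp add: u_def)
  have ug: "1 \<le> k \<Longrightarrow> k \<le> n \<Longrightarrow> g \<omega> k (u k) = u (k - 1)" for k
  proof -
    assume k: "1 \<le> k" "k \<le> n"
    have "n - (k - 1) = Suc (n - k)" using k by simp
    then have "u (k - 1) = Gd \<omega> (k - 1) (Suc (n - k)) v" by (simp add: u_def)
    also have "\<dots> = g \<omega> (k - 1 + 1) (Gd \<omega> (k - 1 + 1) (n - k) v)" by (rule Gd_Suc')
    also have "\<dots> = g \<omega> k (u k)" using k by (simp add: u_def)
    finally show ?thesis by simp
  qed
  have bpk: "1 \<le> k \<Longrightarrow> k \<le> n \<Longrightarrow> bp \<omega> n v k = sel \<omega> k (u k)" for k by (simp add: bp_def u_def)
  have sp: "1 \<le> k \<Longrightarrow> k \<le> n \<Longrightarrow> sel \<omega> k (u k) < en k \<and> rng k (sel \<omega> k (u k)) = u k \<and>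
      \<omega> (k, u k) (sel \<omega> k (u k)) = rk k (u k)" for k
    using sel_props[OF assms(1) _ ult, of k] sel_ex[OF assms(1) _ ult, of k] by simp
  have fp: "fpath n (bp \<omega> n v)"
    unfolding fpath_def
  proof (intro conjI allI impI)
    show "bp \<omega> n v 0 = 0" by (simp add: bp_def)
    fix k assume "1 \<le> k \<and> k \<le> n" then show "bp \<omega> n v k < en k" using sp bpk by simp
  next
    assume n: "1 \<le> n"
    have "src 1 (bp \<omega> n v 1) = g \<omega> 1 (u 1)" using n bpk[of 1] by (simp add: g_def)
    also have "\<dots> = u 0" using ug[of 1] n by simp
    finally show "src 1 (bp \<omega> n v 1) = 0" using ult[of 0] vn0 by simp
  next
    fix k assume k: "1 \<le> k \<and> k < n"
    have "src (Suc k) (bp \<omega> n v (Suc k)) = g \<omega> (Suc k) (u (Suc k))"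
      using k bpk[of "Suc k"] by (simp add: g_def)
    also have "\<dots> = u k" using ug[of "Suc k"] k by simp
    finally show "rng k (bp \<omega> n v k) = src (Suc k) (bp \<omega> n v (Suc k))"
      using sp[of k] bpk[of k] k by simp
  next
    fix k assume "n < k" then show "bp \<omega> n v k = 0" by (simp add: bp_def)
  qed
  have "alw \<omega> k (bp \<omega> n v k)" if "1 \<le> k" "k \<le> n" for k
    using sp[OF that] bpk[OF that] by (simp add: alw_def)
  then have "afp \<omega> n (bp \<omega> n v)" using fp by (simp add: afp_def)
  moreover have "endp n (bp \<omega> n v) = v"
  proof (cases "n = 0")
    case True then show ?thesis using assms(2) vn0 by (simp add: endp_def)
  next
    case False then show ?thesis using sp[of n] bpk[of n] by (simp add: endp_def u_def)
  qed
  ultimately show ?thesis by simp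
qed

lemma bp_tr: assumes "good \<omega>" "w < vn m" "n \<le> m"
  shows "tr n (bp \<omega> m w) = bp \<omega> n (Gd \<omega> n (m - n) w)"
proof (rule afp_unique[OF assms(1)])
  have a: "afp \<omega> m (bp \<omega> m w)" "endp m (bp \<omega> m w) = w" using bp_afp[OF assms(1,2)] by auto
  show "afp \<omega> n (tr n (bp \<omega> m w))" using afp_tr[OF a(1) assms(3)] .
  have lt: "Gd \<omega> n (m - n) w < vn n" using Gd_lt[OF assms(1), of w n "m - n"] assms by simp
  show "afp \<omega> n (bp \<omega> n (Gd \<omega> n (m - n) w))" using bp_afp[OF assms(1) lt] by simp
  have "endp n (tr n (bp \<omega> m w)) = endp n (bp \<omega> m w)" by (rule endp_tr)
  also have "\<dots> = Gd \<omega> n (m - n) w" using afp_Gd[OF assms(1) a(1), of n "m - n"] a(2) assms(3) by simp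
  finally show "endp n (tr n (bp \<omega> m w)) = endp n (bp \<omega> n (Gd \<omega> n (m - n) w))"
    using bp_afp[OF assms(1) lt] by simp
qed

lemma Q_RR: assumes "good \<omega>" shows "bij_betw (endp n) (Q \<omega> n) (RR \<omega> n)"
  unfolding bij_betw_def
proof (intro conjI)
  show "inj_on (endp n) (Q \<omega> n)"
  proof (rule inj_onI)
    fix p q assume "p \<in> Q \<omega> n" "q \<in> Q \<omega> n" "endp n p = endp n q"
    then show "p = q" using afp_unique[OF assms, of n p q] by (simp add: Q_def)
  qed
  show "endp n ` Q \<omega> n = RR \<omega> n"
  proof
    show "endp n ` Q \<omega> n \<subseteq> RR \<omega> n"
    proof
      fix v assume "v \<in> endp n ` Q \<omega> n"
      then obtain p where p: "p \<in> Q \<omega> n" "v = endp n p" by blast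
      have ap: "afp \<omega> n p" using p by (simp add: Q_def)
      have "endp n p < vn n"
      proof (cases "n = 0")
        case True then show ?thesis using vpos[of 0] by (simp add: endp_def)
      next
        case False then show ?thesis by (intro afp_down_lt[OF assms ap]) auto
      qed
      then have "v < vn n" by (simp only: p(2))
      moreover have "\<exists>w<vn (n + j). Gd \<omega> n j w = v" for j
      proof -
        have "\<exists>q. afp \<omega> (n + j) q \<and> tr n q = p" using p(1) le_add1[of n j] unfolding Q_def
          by blast
        then obtain q where q: "afp \<omega> (n + j) q" "tr n q = p" by blast
        have lt: "endp (n + j) q < vn (n + j)"
        proof (cases "n + j = 0")
          case True then show ?thesis using vpos[of 0] by (simp add: endp_def)
        next
          case False then show ?thesis by (intro afp_down_lt[OF assms q(1)]) auto
        qed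
        have "Gd \<omega> n j (endp (n + j) q) = endp n q" using afp_Gd[OF assms q(1)] by simp
        also have "\<dots> = v" using q(2) p(2) endp_tr[of n q] by simp
        finally show ?thesis using lt by blast
      qed
      ultimately show "v \<in> RR \<omega> n" by (simp add: RR_def)
    qed
    show "RR \<omega> n \<subseteq> endp n ` Q \<omega> n"
    proof
      fix v assume v: "v \<in> RR \<omega> n"
      then have vl: "v < vn n" by (simp add: RR_def)
      have "bp \<omega> n v \<in> Q \<omega> n"
        unfolding Q_def
      proof (intro CollectI conjI allI impI)
        show "afp \<omega> n (bp \<omega> n v)" using bp_afp[OF assms vl] by simp
        fix m assume m: "n \<le> m"
        obtain w where w: "w < vn (n + (m - n))" "Gd \<omega> n (m - n) w = v"
          using v by (auto simp: RR_def)
        have wm: "w < vn m" using w m by simp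
        show "\<exists>q. afp \<omega> m q \<and> tr n q = bp \<omega> n v"
          using bp_afp[OF assms wm] bp_tr[OF assms wm m] w(2) by blast
      qed
      moreover have "endp n (bp \<omega> n v) = v" using bp_afp[OF assms vl] by simp
      ultimately show "v \<in> endp n ` Q \<omega> n" by (metis image_eqI)
    qed
  qed
qed

lemma card_Q_RR: "good \<omega> \<Longrightarrow> card (Q \<omega> n) = card (RR \<omega> n)"
  using Q_RR bij_betw_same_card by blast

lemma good_count: assumes "good \<omega>" "infinite {n. vn n = d}"
  shows "\<exists>j\<in>{1..d}. \<exists>n0. \<forall>n\<ge>n0. card (Q \<omega> n) = j"
proof -
  have bd: "card (Q \<omega> n) \<le> d" for n
  proof -
    obtain m where m: "m \<in> {n. vn n = d}" "n \<le> m"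
      using assms(2) infinite_nat_iff_unbounded_le by blast
    have "card (Q \<omega> n) \<le> card (Q \<omega> m)" using Q_mono m by blast
    also have "\<dots> = card (RR \<omega> m)" using card_Q_RR[OF assms(1)] by simp
    also have "\<dots> \<le> vn m" by (rule RR_card_le)
    finally show ?thesis using m by simp
  qed
  let ?R = "range (\<lambda>n. card (Q \<omega> n))"
  have fR: "finite ?R" using bd by (auto intro: finite_subset[of _ "{..d}"])
  define c where "c = Max ?R"
  have "c \<in> ?R" using fR by (simp add: c_def)
  then obtain n0 where n0: "c = card (Q \<omega> n0)" by blast
  have ev: "\<forall>n\<ge>n0. card (Q \<omega> n) = c"
  proof (intro allI impI)
    fix n assume "n0 \<le> n"
    then have "c \<le> card (Q \<omega> n)" using Q_mono n0 by simp
    moreover have "card (Q \<omega> n) \<le> c" using fR by (simp add: c_def)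
    ultimately show "card (Q \<omega> n) = c" by simp
  qed
  have "card (Q \<omega> 0) = 1" using card_Q_RR[OF assms(1), of 0] RR0[OF assms(1)] by simp
  then have "1 \<le> c" using fR c_def by (metis Max_ge rangeI)
  moreover have "c \<le> d" using bd n0 by simp
  ultimately have "c \<in> {1..d}" by simp
  then show ?thesis using ev by blast
qed

end


context BD begin

lemma E_iff: "(finite (Xmax en src rng \<omega>) \<and> card (Xmax en src rng \<omega>) = j) \<longleftrightarrow>
    (\<exists>n0. \<forall>n\<ge>n0. card (Q \<omega> n) = j)"
proof -
  let ?X = "Xmax en src rng \<omega>"
  have ev: "\<exists>N. \<forall>n\<ge>N. card (Q \<omega> n) = card ?X" if fX: "finite ?X"
  proof -
    obtain N where N: "\<forall>n\<ge>N. inj_on (tr n) ?X" using tr_inj[OF fX] by blast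
    have "card (Q \<omega> n) = card ?X" if "N \<le> n" for n
    proof -
      have "inj_on (tr n) ?X" using N that by blast
      then have "card (tr n ` ?X) = card ?X" by (rule card_image)
      then show ?thesis by (simp only: Q_eq)
    qed
    then show ?thesis by blast
  qed
  show ?thesis
  proof
    assume a: "finite ?X \<and> card ?X = j"
    then obtain N where "\<forall>n\<ge>N. card (Q \<omega> n) = card ?X" using ev by blast
    then have "\<forall>n\<ge>N. card (Q \<omega> n) = j" using a by simp
    then show "\<exists>n0. \<forall>n\<ge>n0. card (Q \<omega> n) = j" by blast
  next
    assume "\<exists>n0. \<forall>n\<ge>n0. card (Q \<omega> n) = j"
    then obtain n0 where n0: "\<And>n. n \<ge> n0 \<Longrightarrow> card (Q \<omega> n) = j" by blast
    have fin: "finite ?X"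
    proof (rule ccontr)
      assume "infinite ?X"
      then obtain F where F: "finite F" "card F = Suc j" "F \<subseteq> ?X"
        using infinite_arbitrarily_large by blast
      obtain N where N: "\<forall>n\<ge>N. inj_on (tr n) F" using tr_inj[OF F(1)] by blast
      define m where "m = max n0 N"
      have "tr m ` F \<subseteq> Q \<omega> m" using F(3) unfolding Q_eq by (rule image_mono)
      then have le: "card (tr m ` F) \<le> card (Q \<omega> m)" using Q_fin by (rule card_mono[rotated])
      have "inj_on (tr m) F" using N by (simp add: m_def)
      then have "card (tr m ` F) = Suc j" using F(2) by (simp add: card_image)
      moreover have "card (Q \<omega> m) = j" using n0 by (simp add: m_def)
      ultimately show False using le by simp
    qed
    then obtain N where N: "\<forall>n\<ge>N. card (Q \<omega> n) = card ?X" using ev by blast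
    have "card (Q \<omega> (max n0 N)) = card ?X" using N by simp
    moreover have "card (Q \<omega> (max n0 N)) = j" using n0 by simp
    ultimately show "finite ?X \<and> card ?X = j" using fin by simp
  qed
qed


lemma orders_fin: "finite (orders_at en rng n v)"
proof -
  have "orders_at en rng n v \<subseteq> (\<lambda>f e. if e \<in> IE n v then f e else 0) ` (IE n v \<rightarrow>\<^sub>E {..<card (IE n v)})"
  proof
    fix f assume f: "f \<in> orders_at en rng n v"
    then have "restrict f (IE n v) \<in> IE n v \<rightarrow>\<^sub>E {..<card (IE n v)}"
      by (auto simp: orders_at_def bij_betw_def)
    moreover have "f = (\<lambda>e. if e \<in> IE n v then restrict f (IE n v) e else 0)"
      using f by (auto simp: orders_at_def fun_eq_iff)
    ultimately show "f \<in> (\<lambda>f e. if e \<in> IE n v then f e else 0) ` (IE n v \<rightarrow>\<^sub>E {..<card (IE n v)})"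
      by blast
  qed
  then show ?thesis by (rule finite_subset) (auto intro!: finite_PiE IE_fin)
qed

lemma orders_ne: "orders_at en rng n v \<noteq> {}"
proof -
  obtain h where h: "bij_betw h (IE n v) {0..<card (IE n v)}"
    using ex_bij_betw_finite_nat[OF IE_fin] by blast
  define f where "f e = (if e \<in> IE n v then h e else 0)" for e
  have "bij_betw f (IE n v) {..<card (IE n v)}"
    using h by (subst bij_betw_cong[of _ f h]) (auto simp: f_def atLeast0LessThan)
  then have "f \<in> orders_at en rng n v" by (simp add: orders_at_def f_def)
  then show ?thesis by blast
qed

definition Pm where "Pm = (\<lambda>(n, v). measure_pmf (pmf_of_set (orders_at en rng n v)))"
abbreviation "MM \<equiv> ord_measure vn en rng"

lemma MM_eq: "MM = PiM (vertices vn) Pm" by (simp add: ord_measure_def Pm_def)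

lemma Pm_apply: "Pm (n, v) = measure_pmf (pmf_of_set (orders_at en rng n v))"
  by (simp add: Pm_def)

lemma Pm_apply': "Pm i = measure_pmf (pmf_of_set (orders_at en rng (fst i) (snd i)))"
  by (simp add: Pm_def split_beta)

lemma Pm_prob: "prob_space (Pm i)" by (cases i) (simp add: Pm_def measure_pmf.prob_space_axioms)
lemma sets_Pm[simp]: "sets (Pm i) = UNIV" by (cases i) (simp add: Pm_def)
lemma space_Pm[simp]: "space (Pm i) = UNIV" by (cases i) (simp add: Pm_def)

lemma MMprob: "prob_space MM" unfolding MM_eq by (rule prob_space_PiM) (rule Pm_prob)

lemma space_MM: "space MM = PiE (vertices vn) (\<lambda>_. UNIV)"
  by (simp add: MM_eq space_PiM)

lemma AE_good: "AE \<omega> in MM. good \<omega>"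
proof -
  have "AE \<omega> in MM. \<forall>i\<in>vertices vn. \<omega> i \<in> orders_at en rng (fst i) (snd i)"
  proof (subst AE_ball_countable)
    show "countable (vertices vn)" by (rule countable_subset[of _ UNIV]) auto
    show "\<forall>i\<in>vertices vn. AE \<omega> in MM. \<omega> i \<in> orders_at en rng (fst i) (snd i)"
    proof
      fix i assume i: "i \<in> vertices vn"
      have "AE x in Pm i. x \<in> orders_at en rng (fst i) (snd i)"
        unfolding Pm_apply' AE_measure_pmf_iff set_pmf_of_set[OF orders_ne orders_fin] by blast
      then show "AE \<omega> in MM. \<omega> i \<in> orders_at en rng (fst i) (snd i)"
        unfolding MM_eq by (rule AE_PiM_component[OF Pm_prob i])
    qed
  qed
  then show ?thesis
    by eventually_elim (auto simp: good_def vertices_def)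
qed

lemma sets_Pm_cs: "sets (Pm i) = sets (count_space UNIV)" by simp
lemma meas_Pm: "measurable (M::'a measure) (Pm i) = measurable M (count_space UNIV)"
    by (rule measurable_cong_sets) (simp_all only: sets_Pm_cs)

lemma x4: "(\<lambda>x. x) \<in> Pm i \<rightarrow>\<^sub>M count_space UNIV"
    by (rule measurable_ident_sets[OF sets_Pm_cs[of i]])
lemma coordPi: "i \<in> vertices vn \<Longrightarrow> (\<lambda>\<omega>. \<omega> i) \<in> PiM (vertices vn) Pm \<rightarrow>\<^sub>M count_space UNIV"
  by (rule measurable_compose[OF measurable_component_singleton[of i "vertices vn" Pm] x4])
lemma coordMM: "(\<lambda>\<omega>. \<omega> i) \<in> MM \<rightarrow>\<^sub>M count_space UNIV"
proof (cases "i \<in> vertices vn")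
  case True
  have "(\<lambda>\<omega>. \<omega> i) \<in> PiM (vertices vn) Pm \<rightarrow>\<^sub>M count_space UNIV" by (rule coordPi[OF True])
  then show ?thesis by (simp only: MM_eq)
next
  case False
  have "\<omega> \<in> space MM \<Longrightarrow> \<omega> i = undefined" for \<omega>
    using False unfolding space_MM by (blast intro: PiE_arb)
  then have "(\<lambda>\<omega>. \<omega> i) \<in> MM \<rightarrow>\<^sub>M count_space UNIV \<longleftrightarrow> (\<lambda>\<omega>. undefined :: nat \<Rightarrow> nat) \<in> MM \<rightarrow>\<^sub>M count_space UNIV"
    by (rule Sigma_Algebra.measurable_cong)
  moreover have "(\<lambda>\<omega>. undefined :: nat \<Rightarrow> nat) \<in> MM \<rightarrow>\<^sub>M count_space UNIV"
    by (rule measurable_const) simp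
  ultimately show ?thesis by simp
qed

lemma pred_K: "Measurable.pred M (\<lambda>x. K)"
  by (cases K) (simp_all add: Measurable.pred_def)

lemma RR_pred:
  fixes Ms :: "(nat \<times> nat \<Rightarrow> nat \<Rightarrow> nat) measure"
  assumes co: "\<And>k w. Suc N \<le> k \<Longrightarrow> (\<lambda>\<omega>. \<omega> (k, w)) \<in> Ms \<rightarrow>\<^sub>M count_space UNIV"
    and m: "N \<le> m"
  shows "Measurable.pred Ms (\<lambda>\<omega>. card (RR \<omega> m) = c)"
proof -
  have gm: "(\<lambda>\<omega>. g \<omega> k w) \<in> Ms \<rightarrow>\<^sub>M count_space UNIV" if k: "Suc N \<le> k" for k w
  proof -
    have "(\<lambda>\<omega>. g \<omega> k w) = (\<lambda>\<omega>. (\<lambda>f. src k (SOME e. e \<in> IE k w \<and> f e = rk k w)) (\<omega> (k, w)))"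
      by (simp add: g_def sel_def fun_eq_iff)
    also have "\<dots> \<in> Ms \<rightarrow>\<^sub>M count_space UNIV"
      by (rule measurable_compose[OF co[OF k] measurable_count_space])
    finally show ?thesis .
  qed
  have Gm: "(\<lambda>\<omega>. Gd \<omega> m j w) \<in> Ms \<rightarrow>\<^sub>M count_space UNIV" for j w
  proof (induction j arbitrary: w)
    case 0 then show ?case by simp
  next
    case (Suc j)
    have "(\<lambda>\<omega>. Gd \<omega> m (Suc j) w) = (\<lambda>\<omega>. (\<lambda>i \<omega>. Gd \<omega> m j i) (g \<omega> (m + j + 1) w) \<omega>)" by simp
    also have "\<dots> \<in> Ms \<rightarrow>\<^sub>M count_space UNIV"
      by (rule measurable_compose_countable[OF Suc.IH gm]) (use m in simp)
    finally show ?case .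
  qed
  have eq: "card (RR \<omega> m) = c \<longleftrightarrow> (\<exists>S\<in>{S. S \<subseteq> {..<vn m} \<and> card S = c}.
      \<forall>v\<in>{..<vn m}. (v \<in> S \<longleftrightarrow> (\<forall>j. \<exists>w. w < vn (m + j) \<and> Gd \<omega> m j w = v)))" for \<omega>
  proof
    assume "card (RR \<omega> m) = c"
    then show "\<exists>S\<in>{S. S \<subseteq> {..<vn m} \<and> card S = c}.
      \<forall>v\<in>{..<vn m}. (v \<in> S \<longleftrightarrow> (\<forall>j. \<exists>w. w < vn (m + j) \<and> Gd \<omega> m j w = v))"
      using RR_sub by (intro bexI[of _ "RR \<omega> m"]) (auto simp: RR_def)
  next
    assume "\<exists>S\<in>{S. S \<subseteq> {..<vn m} \<and> card S = c}.
      \<forall>v\<in>{..<vn m}. (v \<in> S \<longleftrightarrow> (\<forall>j. \<exists>w. w < vn (m + j) \<and> Gd \<omega> m j w = v))"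
    then obtain S where S: "S \<subseteq> {..<vn m}" "card S = c"
      "\<forall>v\<in>{..<vn m}. (v \<in> S \<longleftrightarrow> (\<forall>j. \<exists>w. w < vn (m + j) \<and> Gd \<omega> m j w = v))" by blast
    then have "S = RR \<omega> m" by (auto simp: RR_def)
    then show "card (RR \<omega> m) = c" using S by simp
  qed
  have fin: "finite {S. S \<subseteq> {..<vn m} \<and> card S = c}" by simp
  have P: "Measurable.pred Ms (\<lambda>\<omega>. \<forall>j. \<exists>w<vn (m + j). Gd \<omega> m j w = v)" for v
    apply (rule pred_intros_countable(1))
    apply (rule pred_intros_countable(2))
    apply (rule pred_intros_conj1')
    apply (rule pred_count_space_const1[OF Gm])
    done
  have P2: "Measurable.pred Ms (\<lambda>\<omega>. (v \<in> S) = (\<forall>j. \<exists>w<vn (m + j). Gd \<omega> m j w = v))" for v S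
    by (rule pred_intros_logic(6)[OF pred_K P])
  show ?thesis unfolding eq
    apply (rule pred_intros_finite(4)[OF fin])
    apply (rule pred_intros_finite(3))
     apply simp
    apply (rule P2)
    done
qed

end


context BD begin

lemma coordMM2: "(\<lambda>\<omega>. \<omega> i e) \<in> MM \<rightarrow>\<^sub>M count_space UNIV"
  using measurable_compose[OF coordMM[of i] measurable_count_space[of "\<lambda>f. f e" UNIV]] by simp

lemma alw_pred: "Measurable.pred MM (\<lambda>\<omega>. alw \<omega> k e)"
  unfolding alw_def
  apply (rule pred_intros_conj1')
  apply (rule pred_count_space_const1[OF coordMM2])
  done

lemma afp_pred: "Measurable.pred MM (\<lambda>\<omega>. afp \<omega> m q)"
  unfolding afp_def
  apply (rule pred_intros_conj1')
  apply (rule pred_intros_countable(1))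
  apply (rule pred_intros_imp')
  apply (rule alw_pred)
  done

lemma Q_pred: "Measurable.pred MM (\<lambda>\<omega>. card (Q \<omega> n) = c)"
proof -
  define FP where "FP m = {p. fpath m p}" for m
  have finFP: "finite (FP m)" for m using fpath_fin by (simp add: FP_def)
  have Qeq: "Q \<omega> n = {p \<in> FP n. afp \<omega> n p \<and> (\<forall>m. n \<le> m \<longrightarrow> (\<exists>q\<in>FP m. afp \<omega> m q \<and> tr n q = p))}" for \<omega>
    by (auto simp: Q_def FP_def afp_def)
  have eq: "card (Q \<omega> n) = c \<longleftrightarrow> (\<exists>S\<in>{S. S \<subseteq> FP n \<and> card S = c}. \<forall>p\<in>FP n.
      (p \<in> S) = (afp \<omega> n p \<and> (\<forall>m. n \<le> m \<longrightarrow> (\<exists>q\<in>FP m. afp \<omega> m q \<and> tr n q = p))))" for \<omega>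
  proof
    assume "card (Q \<omega> n) = c"
    then show "\<exists>S\<in>{S. S \<subseteq> FP n \<and> card S = c}. \<forall>p\<in>FP n.
      (p \<in> S) = (afp \<omega> n p \<and> (\<forall>m. n \<le> m \<longrightarrow> (\<exists>q\<in>FP m. afp \<omega> m q \<and> tr n q = p)))"
      by (intro bexI[of _ "Q \<omega> n"]) (auto simp: Qeq)
  next
    assume "\<exists>S\<in>{S. S \<subseteq> FP n \<and> card S = c}. \<forall>p\<in>FP n.
      (p \<in> S) = (afp \<omega> n p \<and> (\<forall>m. n \<le> m \<longrightarrow> (\<exists>q\<in>FP m. afp \<omega> m q \<and> tr n q = p)))"
    then obtain S where S: "S \<subseteq> FP n" "card S = c" "\<forall>p\<in>FP n.
      (p \<in> S) = (afp \<omega> n p \<and> (\<forall>m. n \<le> m \<longrightarrow> (\<exists>q\<in>FP m. afp \<omega> m q \<and> tr n q = p)))" by blast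
    have "S = Q \<omega> n" unfolding Qeq using S(1,3) by blast
    then show "card (Q \<omega> n) = c" using S(2) by simp
  qed
  have fin: "finite {S. S \<subseteq> FP n \<and> card S = c}" using finFP by simp
  have P: "Measurable.pred MM (\<lambda>\<omega>. afp \<omega> n p \<and> (\<forall>m. n \<le> m \<longrightarrow> (\<exists>q\<in>FP m. afp \<omega> m q \<and> tr n q = p)))" for p
    apply (rule pred_intros_logic(3))
     apply (rule afp_pred)
    apply (rule pred_intros_countable(1))
    apply (rule pred_intros_imp')
    apply (rule pred_intros_finite(4)[OF finFP])
    apply (rule pred_intros_conj2')
    apply (rule afp_pred)
    done
  have P2: "Measurable.pred MM (\<lambda>\<omega>. (p \<in> S) = (afp \<omega> n p \<and> (\<forall>m. n \<le> m \<longrightarrow> (\<exists>q\<in>FP m. afp \<omega> m q \<and> tr n q = p))))" for p S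
    by (rule pred_intros_logic(6)[OF pred_K P])
  show ?thesis unfolding eq
    apply (rule pred_intros_finite(4)[OF fin])
    apply (rule pred_intros_finite(3)[OF finFP])
    apply (rule P2)
    done
qed

lemma E_meas: "{\<omega> \<in> space MM. finite (Xmax en src rng \<omega>) \<and> card (Xmax en src rng \<omega>) = j} \<in> sets MM"
proof -
  have "Measurable.pred MM (\<lambda>\<omega>. \<exists>n0. \<forall>n. n0 \<le> n \<longrightarrow> card (Q \<omega> n) = j)"
    apply (rule pred_intros_countable(2))
    apply (rule pred_intros_countable(1))
    apply (rule pred_intros_imp')
    apply (rule Q_pred)
    done
  then show ?thesis unfolding E_iff Measurable.pred_def .
qed

definition LL where "LL k = {Suc k} \<times> {..<vn (Suc k)}"
definition Ak where
  "Ak k = sigma_sets (space MM) {(\<lambda>\<omega>. restrict (\<lambda>i. \<omega> i) (LL k)) -` A \<inter> space MM | A. A \<in> sets (PiM (LL k) Pm)}"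
definition Mn where "Mn N = sigma (space MM) (\<Union> (Ak ` {N..}))"

lemma Ak_sub: "Ak k \<subseteq> Pow (space MM)"
  unfolding Ak_def by (rule subsetI, drule sigma_sets_into_sp[rotated]) auto

lemma Ak_sa: "sigma_algebra (space MM) (Ak k)"
  unfolding Ak_def by (rule sigma_algebra_sigma_sets) auto

lemma sets_Mn: "sets (Mn N) = sigma_sets (space MM) (\<Union> (Ak ` {N..}))"
  unfolding Mn_def using Ak_sub by (intro sets_measure_of) auto

lemma space_Mn: "space (Mn N) = space MM"
  unfolding Mn_def using Ak_sub by (intro space_measure_of) auto

lemma coordMn: assumes k: "Suc N \<le> k" shows "(\<lambda>\<omega>. \<omega> (k, w)) \<in> Mn N \<rightarrow>\<^sub>M count_space UNIV"
proof (cases "w < vn k")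
  case True
  define k' where "k' = k - 1"
  have kk: "k = Suc k'" "N \<le> k'" using k by (auto simp: k'_def)
  have inL: "(k, w) \<in> LL k'" using True kk by (simp add: LL_def)
  show ?thesis unfolding measurable_def
  proof (intro CollectI conjI ballI)
    show "(\<lambda>\<omega>. \<omega> (k, w)) \<in> space (Mn N) \<rightarrow> space (count_space UNIV)" by simp
    fix B assume "B \<in> sets (count_space (UNIV :: (nat \<Rightarrow> nat) set))"
    define C where "C = {f \<in> space (PiM (LL k') Pm). f (k, w) \<in> B}"
    have C: "C \<in> sets (PiM (LL k') Pm)" unfolding C_def
      by (rule sets_Collect_single[OF inL]) simp
    have eq: "(\<lambda>\<omega>. \<omega> (k, w)) -` B \<inter> space (Mn N) = (\<lambda>\<omega>. restrict (\<lambda>i. \<omega> i) (LL k')) -` C \<inter> space MM"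
      unfolding space_Mn C_def using inL by (auto simp: space_PiM)
    have "(\<lambda>\<omega>. restrict (\<lambda>i. \<omega> i) (LL k')) -` C \<inter> space MM \<in> Ak k'"
      unfolding Ak_def using C by (intro sigma_sets.Basic) blast
    then have "(\<lambda>\<omega>. restrict (\<lambda>i. \<omega> i) (LL k')) -` C \<inter> space MM \<in> \<Union> (Ak ` {N..})"
      using kk by blast
    then show "(\<lambda>\<omega>. \<omega> (k, w)) -` B \<inter> space (Mn N) \<in> sets (Mn N)"
      unfolding eq sets_Mn by (rule sigma_sets.Basic)
  qed
next
  case False
  have nv: "(k, w) \<notin> vertices vn" using False by (simp add: vertices_def)
  have "\<omega> \<in> space (Mn N) \<Longrightarrow> \<omega> (k, w) = undefined" for \<omega>
    using nv unfolding space_Mn space_MM by (blast intro: PiE_arb)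
  then have "(\<lambda>\<omega>. \<omega> (k, w)) \<in> Mn N \<rightarrow>\<^sub>M count_space UNIV \<longleftrightarrow> (\<lambda>\<omega>. undefined :: nat \<Rightarrow> nat) \<in> Mn N \<rightarrow>\<^sub>M count_space UNIV"
    by (rule Sigma_Algebra.measurable_cong)
  moreover have "(\<lambda>\<omega>. undefined :: nat \<Rightarrow> nat) \<in> Mn N \<rightarrow>\<^sub>M count_space UNIV"
    by (rule measurable_const) simp
  ultimately show ?thesis by simp
qed

definition TT where "TT j = {\<omega> \<in> space MM. \<exists>n0. \<forall>n\<ge>n0. card (RR \<omega> n) = j}"

lemma TT_Mn: "TT j \<in> sets (Mn N)"
proof -
  have "Measurable.pred (Mn N) (\<lambda>\<omega>. \<exists>n0. \<forall>n. N \<le> n \<longrightarrow> n0 \<le> n \<longrightarrow> card (RR \<omega> n) = j)"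
    apply (rule pred_intros_countable(2))
    apply (rule pred_intros_countable(1))
    apply (rule pred_intros_imp')
    apply (rule pred_intros_imp')
    apply (rule RR_pred[OF coordMn])
     apply assumption+
    done
  moreover have "(\<exists>n0. \<forall>n. N \<le> n \<longrightarrow> n0 \<le> n \<longrightarrow> card (RR \<omega> n) = j) \<longleftrightarrow>
     (\<exists>n0. \<forall>n\<ge>n0. card (RR \<omega> n) = j)" for \<omega>
  proof
    assume "\<exists>n0. \<forall>n. N \<le> n \<longrightarrow> n0 \<le> n \<longrightarrow> card (RR \<omega> n) = j"
    then obtain n0 where "\<forall>n. N \<le> n \<longrightarrow> n0 \<le> n \<longrightarrow> card (RR \<omega> n) = j" by blast
    then have "\<forall>n\<ge>max N n0. card (RR \<omega> n) = j" by simp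
    then show "\<exists>n0. \<forall>n\<ge>n0. card (RR \<omega> n) = j" by blast
  qed blast
  then have "TT j = {\<omega> \<in> space (Mn N). \<exists>n0. \<forall>n. N \<le> n \<longrightarrow> n0 \<le> n \<longrightarrow> card (RR \<omega> n) = j}"
    unfolding TT_def space_Mn by blast
  ultimately show ?thesis unfolding Measurable.pred_def by (simp only:)
qed

lemma TT_tail: "TT j \<in> prob_space.tail_events MM Ak"
  using TT_Mn sets_Mn unfolding prob_space.tail_events_def[OF MMprob] by auto

lemma indep_coord: "prob_space.indep_vars MM Pm (\<lambda>i \<omega>. \<omega> i) (vertices vn)"
proof -
  interpret prob_space MM by (rule MMprob)
  have "(1, 0) \<in> vertices vn" using vpos[of 1] by (simp add: vertices_def)
  then have ne: "vertices vn \<noteq> {}" by blast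
  have rv: "(\<lambda>\<omega>. \<omega> i) \<in> MM \<rightarrow>\<^sub>M Pm i" if "i \<in> vertices vn" for i
    unfolding MM_eq by (rule measurable_component_singleton[of i "vertices vn" Pm, OF that])
  have "distr MM (PiM (vertices vn) Pm) (\<lambda>x. restrict (\<lambda>i. x i) (vertices vn)) = distr MM MM (\<lambda>x. x)"
  proof (rule distr_cong)
    show "sets (PiM (vertices vn) Pm) = sets MM" by (simp only: MM_eq)
    fix x assume "x \<in> space MM"
    then show "restrict (\<lambda>i. x i) (vertices vn) = x" unfolding space_MM by (rule PiE_restrict)
  qed simp
  also have "\<dots> = MM" by (rule distr_id)
  also have "\<dots> = PiM (vertices vn) (\<lambda>i. distr MM (Pm i) (\<lambda>\<omega>. \<omega> i))"
    unfolding MM_eq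
    by (rule PiM_cong[OF refl], rule distr_PiM_component[symmetric, OF Pm_prob]) assumption
  finally show ?thesis
    by (subst indep_vars_iff_distr_eq_PiM'[OF ne rv]) assumption+
qed

lemma indep_Ak: "prob_space.indep_sets MM Ak UNIV"
proof -
  interpret prob_space MM by (rule MMprob)
  have "indep_vars (\<lambda>j. PiM (LL j) Pm) (\<lambda>j \<omega>. restrict (\<lambda>i. \<omega> i) (LL j)) UNIV"
  proof (rule indep_vars_restrict[OF indep_coord])
    show "LL j \<subseteq> vertices vn" for j by (auto simp: LL_def vertices_def)
    show "disjoint_family_on LL UNIV" by (auto simp: disjoint_family_on_def LL_def)
  qed
  then show ?thesis unfolding indep_vars_def Ak_def by blast
qed

lemma TT_01: "measure MM (TT j) = 0 \<or> measure MM (TT j) = 1"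
  using prob_space.kolmogorov_0_1_law[OF MMprob Ak_sa indep_Ak TT_tail] .

lemma TT_ev: "TT j \<in> sets MM"
proof -
  have "Ak k \<subseteq> sets MM" for k using indep_Ak unfolding prob_space.indep_sets_def[OF MMprob] by blast
  then show ?thesis using prob_space.tail_events_sets[OF MMprob] TT_tail by blast
qed

end


context BD begin

lemma good_TT: "good \<omega> \<Longrightarrow> \<omega> \<in> space MM \<Longrightarrow>
   (\<omega> \<in> TT j \<longleftrightarrow> finite (Xmax en src rng \<omega>) \<and> card (Xmax en src rng \<omega>) = j)"
  unfolding E_iff TT_def using card_Q_RR[of \<omega>] by simp

lemma main_max: assumes inf: "infinite {n. vn n = d}"
  shows "\<exists>j\<in>{1..d}. (AE \<omega> in MM. finite (Xmax en src rng \<omega>) \<and> card (Xmax en src rng \<omega>) = j) \<and>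
     emeasure MM {\<omega> \<in> space MM. finite (Xmax en src rng \<omega>) \<and> card (Xmax en src rng \<omega>) = j} = 1"
proof -
  interpret prob_space MM by (rule MMprob)
  have AEin: "AE \<omega> in MM. \<omega> \<in> (\<Union>j\<in>{1..d}. TT j)"
    using AE_good AE_space
  proof eventually_elim
    case (elim \<omega>)
    obtain j where j: "j \<in> {1..d}" "\<exists>n0. \<forall>n\<ge>n0. card (Q \<omega> n) = j"
      using good_count[OF elim(1) inf] by blast
    then have "\<omega> \<in> TT j" unfolding TT_def using elim card_Q_RR[OF elim(1)] by simp
    then show ?case using j(1) by blast
  qed
  have Uev: "(\<Union>j\<in>{1..d}. TT j) \<in> events" using TT_ev by blast
  have p1: "prob (\<Union>j\<in>{1..d}. TT j) = 1" using AEin AE_in_set_eq_1[OF Uev] by simp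
  have le: "prob (\<Union>j\<in>{1..d}. TT j) \<le> (\<Sum>j\<in>{1..d}. prob (TT j))"
    by (rule measure_UNION_le) (auto intro: TT_ev)
  have "\<exists>j\<in>{1..d}. prob (TT j) \<noteq> 0"
  proof (rule ccontr)
    assume "\<not> (\<exists>j\<in>{1..d}. prob (TT j) \<noteq> 0)"
    then have "(\<Sum>j\<in>{1..d}. prob (TT j)) = 0" by simp
    then show False using p1 le by simp
  qed
  then obtain j where j: "j \<in> {1..d}" "prob (TT j) \<noteq> 0" by blast
  then have "prob (TT j) = 1" using TT_01[of j] by simp
  then have AET: "AE \<omega> in MM. \<omega> \<in> TT j" using AE_in_set_eq_1[OF TT_ev] by simp
  have AEE: "AE \<omega> in MM. finite (Xmax en src rng \<omega>) \<and> card (Xmax en src rng \<omega>) = j"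
    using AET AE_good AE_space by eventually_elim (use good_TT in blast)
  let ?E = "{\<omega> \<in> space MM. finite (Xmax en src rng \<omega>) \<and> card (Xmax en src rng \<omega>) = j}"
  have "AE \<omega> in MM. \<omega> \<in> ?E" using AEE AE_space by eventually_elim blast
  then have "prob ?E = 1" using AE_in_set_eq_1[OF E_meas] by simp
  then have "emeasure MM ?E = 1" using emeasure_eq_measure[of ?E] by simp
  with AEE j(1) show ?thesis by blast
qed

definition rvf where "rvf n v f = (\<lambda>e. if e \<in> IE n v then card (IE n v) - 1 - f e else 0)"
definition rv where "rv \<omega> = restrict (\<lambda>i. rvf (fst i) (snd i) (\<omega> i)) (vertices vn)"

lemma orders_lt: "f \<in> orders_at en rng n v \<Longrightarrow> e \<in> IE n v \<Longrightarrow> f e < card (IE n v)"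
  unfolding orders_at_def bij_betw_def by auto

lemma rvf_orders: assumes f: "f \<in> orders_at en rng n v" shows "rvf n v f \<in> orders_at en rng n v"
proof -
  let ?c = "card (IE n v)"
  have b1: "bij_betw f (IE n v) {..<?c}" using f by (simp add: orders_at_def)
  have b2: "bij_betw (\<lambda>a. ?c - 1 - a) {..<?c} {..<?c}"
    by (rule bij_betw_byWitness[where f'="\<lambda>a. ?c - 1 - a"]) auto
  have "bij_betw ((\<lambda>a. ?c - 1 - a) \<circ> f) (IE n v) {..<?c}" by (rule bij_betw_trans[OF b1 b2])
  then have "bij_betw (rvf n v f) (IE n v) {..<?c}"
    by (rule bij_betw_cong[THEN iffD1, rotated]) (simp add: rvf_def)
  then show ?thesis by (simp add: orders_at_def rvf_def)
qed

lemma rvf_invol: assumes f: "f \<in> orders_at en rng n v" shows "rvf n v (rvf n v f) = f"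
proof
  fix e show "rvf n v (rvf n v f) e = f e"
  proof (cases "e \<in> IE n v")
    case True then show ?thesis using orders_lt[OF f True] by (simp add: rvf_def)
  next
    case False then show ?thesis using f by (simp add: rvf_def orders_at_def)
  qed
qed

lemma map_rvf: "map_pmf (rvf n v) (pmf_of_set (orders_at en rng n v)) = pmf_of_set (orders_at en rng n v)"
proof -
  have inj: "inj_on (rvf n v) (orders_at en rng n v)"
    by (rule inj_onI) (metis rvf_invol)
  have "rvf n v ` orders_at en rng n v = orders_at en rng n v"
  proof
    show "rvf n v ` orders_at en rng n v \<subseteq> orders_at en rng n v" using rvf_orders by blast
    show "orders_at en rng n v \<subseteq> rvf n v ` orders_at en rng n v"
      using rvf_invol rvf_orders by (metis image_eqI subsetI)
  qed
  then show ?thesis using map_pmf_of_set_inj[OF inj orders_ne orders_fin] by simp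
qed

lemma anyPm: "h \<in> Pm i \<rightarrow>\<^sub>M Pm j" by (simp add: measurable_def)

lemma rv_meas: "rv \<in> PiM (vertices vn) Pm \<rightarrow>\<^sub>M PiM (vertices vn) Pm"
  unfolding rv_def
proof (rule measurable_restrict)
  fix i assume i: "i \<in> vertices vn"
  show "(\<lambda>x. rvf (fst i) (snd i) (x i)) \<in> PiM (vertices vn) Pm \<rightarrow>\<^sub>M Pm i"
    by (rule measurable_compose[OF measurable_component_singleton[of i "vertices vn" Pm, OF i] anyPm])
qed

lemma pps: "product_prob_space Pm"
  unfolding product_prob_space_def product_prob_space_axioms_def product_sigma_finite_def
  using Pm_prob prob_space_imp_sigma_finite by blast

lemma distr_rv: "distr (PiM (vertices vn) Pm) (PiM (vertices vn) Pm) rv = PiM (vertices vn) Pm"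
proof (rule product_prob_space.PiM_eq[OF pps])
  show "sets (distr (PiM (vertices vn) Pm) (PiM (vertices vn) Pm) rv) = sets (PiM (vertices vn) Pm)"
    by (rule sets_distr)
  fix J F assume J: "finite J" "J \<subseteq> vertices vn" and F: "\<And>j. j \<in> J \<Longrightarrow> F j \<in> sets (Pm j)"
  let ?G = "\<lambda>j. rvf (fst j) (snd j) -` F j"
  have inS: "prod_emb (vertices vn) Pm J (PiE J F) \<in> sets (PiM (vertices vn) Pm)"
    using J by (intro sets_PiM_I) auto
  have seteq: "rv -` prod_emb (vertices vn) Pm J (PiE J F) \<inter> space (PiM (vertices vn) Pm) =
      prod_emb (vertices vn) Pm J (PiE J ?G)"
    using J(2) unfolding prod_emb_def space_PiM rv_def by (auto simp: PiE_iff subset_iff; force)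
  have "emeasure (distr (PiM (vertices vn) Pm) (PiM (vertices vn) Pm) rv) (prod_emb (vertices vn) Pm J (PiE J F))
      = emeasure (PiM (vertices vn) Pm) (prod_emb (vertices vn) Pm J (PiE J ?G))"
    using emeasure_distr[OF rv_meas inS] seteq by simp
  also have "\<dots> = (\<Prod>j\<in>J. emeasure (Pm j) (?G j))"
    using J by (intro emeasure_PiM_emb Pm_prob) auto
  also have "\<dots> = (\<Prod>j\<in>J. emeasure (Pm j) (F j))"
  proof (rule prod.cong[OF refl])
    fix j
    have "emeasure (Pm j) (?G j) = emeasure (map_pmf (rvf (fst j) (snd j)) (pmf_of_set (orders_at en rng (fst j) (snd j)))) (F j)"
      by (simp add: Pm_apply')
    also have "\<dots> = emeasure (Pm j) (F j)" by (simp only: map_rvf Pm_apply')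
    finally show "emeasure (Pm j) (?G j) = emeasure (Pm j) (F j)" .
  qed
  finally show "emeasure (distr (PiM (vertices vn) Pm) (PiM (vertices vn) Pm) rv) (prod_emb (vertices vn) Pm J (PiE J F))
      = (\<Prod>j\<in>J. emeasure (Pm j) (F j))" .
qed

lemma rv_Xmax: assumes g: "good \<omega>" shows "Xmax en src rng (rv \<omega>) = Xmin en src rng \<omega>"
proof -
  have key: "rv \<omega> (n, rng n (x n)) (x n) = card (IE n (rng n (x n))) - 1 \<longleftrightarrow> \<omega> (n, rng n (x n)) (x n) = 0"
    if x: "x \<in> path_space en src rng" and n: "1 \<le> n" for x n
  proof -
    let ?v = "rng n (x n)"
    have xe: "x n < en n" using x n by (simp add: path_space_def)
    have vl: "?v < vn n" using edge_ok[OF n xe] by simp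
    have vert: "(n, ?v) \<in> vertices vn" using vl n by (simp add: vertices_def)
    have inIE: "x n \<in> IE n ?v" using xe by (simp add: in_edges_def)
    have ord: "\<omega> (n, ?v) \<in> orders_at en rng n ?v" using g n vl by (simp add: good_def)
    have lt: "\<omega> (n, ?v) (x n) < card (IE n ?v)" by (rule orders_lt[OF ord inIE])
    have "rv \<omega> (n, ?v) (x n) = card (IE n ?v) - 1 - \<omega> (n, ?v) (x n)"
      using vert inIE by (simp add: rv_def rvf_def)
    then show ?thesis using lt by auto
  qed
  show ?thesis unfolding Xmax_def Xmin_def using key by auto
qed

end

theorem mainTheorem17:
  fixes vn en :: "nat \<Rightarrow> nat" and src rng :: "nat \<Rightarrow> nat \<Rightarrow> nat" and d :: nat
  assumes "is_bratteli vn en src rng"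
    and "aperiodic en src rng"
    and "has_rank vn d"
  shows "\<exists>j\<in>{1..d}.
     (AE \<omega> in ord_measure vn en rng.
        finite (Xmax en src rng \<omega>) \<and> card (Xmax en src rng \<omega>) = j \<and>
        finite (Xmin en src rng \<omega>) \<and> card (Xmin en src rng \<omega>) = j) \<and>
     emeasure (ord_measure vn en rng)
       {\<omega> \<in> space (ord_measure vn en rng).
          finite (Xmax en src rng \<omega>) \<and> card (Xmax en src rng \<omega>) = j} = 1"
proof -
  interpret BD vn en src rng using assms(1) by (rule BD.intro)
  obtain M where M: "\<And>n. vn n \<le> M" and d: "d = (LEAST k. infinite {n. vn n = k})"
    using assms(3) unfolding has_rank_def by blast
  have "\<exists>k. infinite {n. vn n = k}"
  proof (rule ccontr)
    assume "\<not> (\<exists>k. infinite {n. vn n = k})"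
    then have "finite (\<Union>k\<in>{..M}. {n. vn n = k})" by auto
    moreover have "(\<Union>k\<in>{..M}. {n. vn n = k}) = UNIV" using M by auto
    ultimately show False by simp
  qed
  then have inf: "infinite {n. vn n = d}" unfolding d by (rule LeastI_ex)
  obtain j where j: "j \<in> {1..d}"
    and AEE: "AE \<omega> in MM. finite (Xmax en src rng \<omega>) \<and> card (Xmax en src rng \<omega>) = j"
    and em: "emeasure MM {\<omega> \<in> space MM. finite (Xmax en src rng \<omega>) \<and> card (Xmax en src rng \<omega>) = j} = 1"
    using main_max[OF inf] by blast
  have rvM: "rv \<in> MM \<rightarrow>\<^sub>M MM" using rv_meas by (simp only: MM_eq)
  have dM: "distr MM MM rv = MM" using distr_rv by (simp only: MM_eq)
  have "AE \<omega> in distr MM MM rv. finite (Xmax en src rng \<omega>) \<and> card (Xmax en src rng \<omega>) = j"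
    using AEE by (simp only: dM)
  then have "AE \<omega> in MM. finite (Xmax en src rng (rv \<omega>)) \<and> card (Xmax en src rng (rv \<omega>)) = j"
    by (rule AE_distrD[OF rvM])
  then have "AE \<omega> in MM. finite (Xmax en src rng \<omega>) \<and> card (Xmax en src rng \<omega>) = j \<and>
        finite (Xmin en src rng \<omega>) \<and> card (Xmin en src rng \<omega>) = j"
    using AEE AE_good by eventually_elim (use rv_Xmax in metis)
  with j em show ?thesis by blast
qed


end
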